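(* Let $f\colon\{0,1\}^n\to\{0,1\}^n$ and $F(x,i)=f(x)_{1,\ldots,i-1}$ on $\{0,1\}^n\times[n]$, and let $Z=(X,I)$ be uniform on $\{0,1\}^n\times[n]$. Let $A$ be an $F$-collision-finder, and for $(x,i)$ let $\varepsilon(x,i)$ be the statistical distance between the output distribution of $A(x,i;R)$ ($R$ uniform coins) and the uniform distribution on $F^{-1}(F(x,i))$. If $H(A(Z;R)\mid Z)\ge H(Z\mid F(Z))-\frac{1}{64n^2}$, then $\mathbb{E}_{i\leftarrow[n],x\leftarrow\{0,1\}^n}[\varepsilon(x,i)]\le\frac{1}{8n}$.
   Context: An $F$-collision-finder is a randomized algorithm $A$ with $A(z;r)\in F^{-1}(F(z))$ for every input $z$ in the domain of $F$ and coins $r$. Statistical distance between $P,Q$ is $\max_T|P(T)-Q(T)|$. $H(\cdot\mid\cdot)$ is conditional Shannon entropy. *)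

theory Defs
  imports "HOL-Probability.Probability"
begin

definition entropy_pmf :: "'a pmf \<Rightarrow> real" where
  "entropy_pmf p = - (\<Sum>x\<in>set_pmf p. pmf p x * log 2 (pmf p x))"

text \<open>Conditional Shannon entropy H(Y | X) (in bits) of a finitely supported
  joint distribution of the pair (X, Y).\<close>
definition cond_entropy_pmf :: "('a \<times> 'b) pmf \<Rightarrow> real" where
  "cond_entropy_pmf p =
     (\<Sum>xy\<in>set_pmf p. pmf p xy * log 2 (pmf (map_pmf fst p) (fst xy) / pmf p xy))"

definition stat_dist :: "'a pmf \<Rightarrow> 'a pmf \<Rightarrow> real" where
  "stat_dist P Q = (SUP T. \<bar>measure_pmf.prob P T - measure_pmf.prob Q T\<bar>)"

definition dom_n :: "nat \<Rightarrow> (bool list \<times> nat) set" where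
  "dom_n n = {(x, i). length x = n \<and> i \<in> {1..n}}"

definition Fpre :: "(bool list \<Rightarrow> bool list) \<Rightarrow> bool list \<times> nat \<Rightarrow> bool list" where
  "Fpre f z = take (snd z - 1) (f (fst z))"

definition Fpreimage :: "nat \<Rightarrow> (bool list \<Rightarrow> bool list) \<Rightarrow> bool list \<times> nat \<Rightarrow> (bool list \<times> nat) set" where
  "Fpreimage n f z = {z' \<in> dom_n n. Fpre f z' = Fpre f z}"

definition out_dist :: "('z \<Rightarrow> 'r::finite \<Rightarrow> 'w) \<Rightarrow> 'z \<Rightarrow> 'w pmf" where
  "out_dist A z = map_pmf (A z) (pmf_of_set (UNIV :: 'r set))"

end

theory Submission imports Defs "HOL-Analysis.Analysis" begin

lemma ln_upper_lo:
  fixes s :: real assumes "s \<ge> 1" shows "ln s \<le> (s^2 - 1) / (2 * s)"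
proof -
  let ?f = "\<lambda>s::real. (s^2 - 1) / (2 * s) - ln s"
  have "?f 1 \<le> ?f s"
  proof (rule DERIV_nonneg_imp_nondecreasing[OF assms])
    fix x :: real assume x: "1 \<le> x" "x \<le> s"
    have "DERIV ?f x :> ((2 * x) * (2 * x) - (x^2 - 1) * 2) / (2 * x)^2 - 1/x"
      using x by (auto intro!: derivative_eq_intros simp: power2_eq_square)
    moreover have "((2 * x) * (2 * x) - (x^2 - 1) * 2) / (2 * x)^2 - 1/x = (x-1)^2 / (2 * x^2)"
      using x by (simp add: field_simps power2_eq_square)
    moreover have "(x-1)^2 / (2 * x^2) \<ge> 0" by simp
    ultimately show "\<exists>y. DERIV ?f x :> y \<and> y \<ge> 0" by auto
  qed
  thus ?thesis by simp
qed

lemma ln_upper_hi: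
  fixes x :: real assumes "0 \<le> x" "x < 1" shows "ln (1 - x) \<le> - x - x^2/2"
proof -
  let ?f = "\<lambda>x::real. ln (1 - x) + x + x^2/2"
  have "?f x \<le> ?f 0"
  proof (rule DERIV_nonpos_imp_nonincreasing[OF assms(1)])
    fix y :: real assume y: "0 \<le> y" "y \<le> x"
    have "DERIV ?f y :> -1 / (1 - y) + 1 + y"
      using y assms by (auto intro!: derivative_eq_intros simp: power2_eq_square field_simps)
    moreover have "-1 / (1 - y) + 1 + y = - (y^2) / (1 - y)"
      using y assms by (simp add: field_simps power2_eq_square)
    moreover have "- (y^2) / (1 - y) \<le> 0" using y assms by simp
    ultimately show "\<exists>d. DERIV ?f y :> d \<and> d \<le> 0" by auto
  qed
  thus ?thesis by simp
qed

lemma G_lo: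
  fixes p u :: real assumes "0 \<le> p" "p \<le> u" "0 < u"
  shows "(u - p)^2 / (2 * u) \<le> p * ln (p/u) - p + u"
proof (cases "p = 0")
  case True thus ?thesis using assms by (simp add: power2_eq_square field_simps)
next
  case False
  hence p: "p > 0" using assms by simp
  have "ln (u/p) \<le> ((u/p)^2 - 1) / (2 * (u/p))" using assms p by (intro ln_upper_lo) simp
  hence "p * ln (u/p) \<le> p * (((u/p)^2 - 1) / (2 * (u/p)))" using p by (intro mult_left_mono) auto
  also have "\<dots> = (u^2 - p^2) / (2 * u)" using p assms by (simp add: field_simps power2_eq_square)
  finally have "p * ln (u/p) \<le> (u^2 - p^2) / (2 * u)" .
  moreover have "ln (p/u) = - ln (u/p)" using p assms by (simp add: ln_div)
  moreover have "(u - p)^2 / (2 * u) = - ((u^2 - p^2) / (2 * u)) - p + u"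
    using assms by (simp add: field_simps power2_eq_square)
  ultimately show ?thesis by simp
qed

lemma G_hi:
  fixes p u :: real assumes "0 < u" "u \<le> p"
  shows "(p - u)^2 / (2 * p) \<le> p * ln (p/u) - p + u"
proof -
  have p: "p > 0" using assms by simp
  define x where "x = 1 - u/p"
  have x: "0 \<le> x" "x < 1" using assms p by (auto simp: x_def field_simps)
  have "ln (1 - x) \<le> - x - x^2/2" by (rule ln_upper_hi[OF x])
  moreover have "1 - x = u/p" by (simp add: x_def)
  ultimately have "ln (u/p) \<le> - x - x^2/2" by simp
  moreover have "ln (p/u) = - ln (u/p)" using p assms by (simp add: ln_div)
  ultimately have "x + x^2/2 \<le> ln (p/u)" by linarith
  hence "p * (x + x^2/2) \<le> p * ln (p/u)" using p by (intro mult_left_mono) auto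
  moreover have "p * (x + x^2/2) - p + u = (p - u)^2 / (2 * p)"
    using p by (simp add: x_def field_simps power2_eq_square)
  ultimately show ?thesis by linarith
qed


lemma weighted_CS:
  fixes a b :: "'a \<Rightarrow> real"
  assumes "\<And>i. i \<in> I \<Longrightarrow> b i > 0"
  shows "(\<Sum>i\<in>I. a i)^2 \<le> (\<Sum>i\<in>I. (a i)^2 / b i) * (\<Sum>i\<in>I. b i)"
proof -
  have "(\<Sum>i\<in>I. a i) = (\<Sum>i\<in>I. (a i / sqrt (b i)) * sqrt (b i))"
  proof (intro sum.cong refl)
    fix i assume "i \<in> I"
    hence "sqrt (b i) > 0" using assms by simp
    thus "a i = a i / sqrt (b i) * sqrt (b i)" by simp
  qed
  hence "(\<Sum>i\<in>I. a i)^2 \<le> (\<Sum>i\<in>I. (a i / sqrt (b i))^2) * (\<Sum>i\<in>I. (sqrt (b i))^2)"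
    using Cauchy_Schwarz_ineq_sum[of "\<lambda>i. a i / sqrt (b i)" "\<lambda>i. sqrt (b i)" I] by simp
  also have "\<dots> = (\<Sum>i\<in>I. (a i)^2 / b i) * (\<Sum>i\<in>I. b i)"
    using assms by (intro arg_cong2[where f="(*)"] sum.cong) (auto simp: power_divide less_imp_le)
  finally show ?thesis .
qed


lemma stat_dist_bound:
  fixes P :: "'a pmf" and S :: "'a set"
  assumes fin: "finite S" and ne: "S \<noteq> {}" and sub: "set_pmf P \<subseteq> S"
  shows "(stat_dist P (pmf_of_set S))^2
         \<le> log 2 (card S) - (\<Sum>w\<in>set_pmf P. pmf P w * log 2 (1 / pmf P w))"
proof -
  define N where "N = real (card S)"
  have Npos: "N > 0" using fin ne by (simp add: N_def card_gt_0_iff)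
  define u where "u = 1 / N"
  have upos: "u > 0" using Npos by (simp add: u_def)
  define p where "p = pmf P"
  have p0: "\<And>w. p w \<ge> 0" by (simp add: p_def)
  have sump: "sum p S = 1" using sum_pmf_eq_1[OF fin sub] by (simp add: p_def)
  have sumu: "sum (\<lambda>_. u) S = 1" using Npos by (simp add: u_def N_def)
  define eps where "eps = (\<Sum>w\<in>S. max (p w - u) 0)"
  define eps' where "eps' = (\<Sum>w\<in>S. max (u - p w) 0)"
  have "eps - eps' = (\<Sum>w\<in>S. p w - u)"
    unfolding eps_def eps'_def sum_subtractf[symmetric] by (intro sum.cong) auto
  also have "\<dots> = 0" using sump sumu by (simp add: sum_subtractf)
  finally have eq: "eps' = eps" by simp
  have ev: "\<bar>measure_pmf.prob P T - measure_pmf.prob (pmf_of_set S) T\<bar> \<le> eps" for T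
  proof -
    have "measure_pmf.prob P T = measure_pmf.prob P (T \<inter> S)"
    proof -
      have "measure_pmf.prob P (T \<inter> S) = measure_pmf.prob P (T \<inter> S \<inter> set_pmf P)"
        by (rule measure_Int_set_pmf[symmetric])
      also have "T \<inter> S \<inter> set_pmf P = T \<inter> set_pmf P" using sub by auto
      finally show ?thesis by (simp add: measure_Int_set_pmf)
    qed
    also have "\<dots> = sum p (T \<inter> S)" using fin by (simp add: measure_measure_pmf_finite p_def)
    finally have PT: "measure_pmf.prob P T = sum p (T \<inter> S)" .
    have UT: "measure_pmf.prob (pmf_of_set S) T = sum (\<lambda>_. u) (T \<inter> S)"
      using fin ne by (simp add: measure_pmf_of_set u_def N_def Int_commute)
    have d: "measure_pmf.prob P T - measure_pmf.prob (pmf_of_set S) T = (\<Sum>w\<in>T \<inter> S. p w - u)"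
      by (simp add: PT UT sum_subtractf)
    have "(\<Sum>w\<in>T \<inter> S. p w - u) \<le> (\<Sum>w\<in>T \<inter> S. max (p w - u) 0)" by (intro sum_mono) auto
    also have "\<dots> \<le> eps" unfolding eps_def using fin by (intro sum_mono2) auto
    finally have 1: "(\<Sum>w\<in>T \<inter> S. p w - u) \<le> eps" .
    have "- (\<Sum>w\<in>T \<inter> S. p w - u) = (\<Sum>w\<in>T \<inter> S. u - p w)" by (simp add: sum_negf[symmetric])
    also have "\<dots> \<le> (\<Sum>w\<in>T \<inter> S. max (u - p w) 0)" by (intro sum_mono) auto
    also have "\<dots> \<le> eps'" unfolding eps'_def using fin by (intro sum_mono2) auto
    finally have 2: "- (\<Sum>w\<in>T \<inter> S. p w - u) \<le> eps" using eq by simp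
    show ?thesis using 1 2 d by linarith
  qed
  have sd_le: "stat_dist P (pmf_of_set S) \<le> eps"
    unfolding stat_dist_def by (rule cSUP_least) (auto intro: ev)
  have sd_ge: "stat_dist P (pmf_of_set S) \<ge> 0"
  proof -
    have "\<bar>measure_pmf.prob P {} - measure_pmf.prob (pmf_of_set S) {}\<bar>
          \<le> stat_dist P (pmf_of_set S)"
      unfolding stat_dist_def by (rule cSUP_upper) (auto intro!: bdd_aboveI2 ev)
    thus ?thesis by simp
  qed
  have sq: "(stat_dist P (pmf_of_set S))^2 \<le> eps^2"
    using sd_le sd_ge by (intro power_mono) auto
  define G where "G w = p w * ln (p w / u) - p w + u" for w
  define lo where "lo = {w\<in>S. p w < u}"
  define hi where "hi = {w\<in>S. \<not> p w < u}"
  have lohi: "lo \<union> hi = S" "lo \<inter> hi = {}" "finite lo" "finite hi"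
    using fin by (auto simp: lo_def hi_def)
  have Gsplit: "sum G S = sum G lo + sum G hi"
    using sum.union_disjoint[of lo hi G] lohi by simp
  have epslo: "eps = (\<Sum>w\<in>lo. u - p w)"
  proof -
    have "eps' = (\<Sum>w\<in>S. if p w < u then u - p w else 0)"
      unfolding eps'_def by (intro sum.cong) auto
    also have "\<dots> = (\<Sum>w\<in>lo. u - p w)" unfolding lo_def using fin by (simp add: sum.inter_filter)
    finally show ?thesis using eq by simp
  qed
  have epshi: "eps = (\<Sum>w\<in>hi. p w - u)"
  proof -
    have "eps = (\<Sum>w\<in>S. if \<not> p w < u then p w - u else 0)"
      unfolding eps_def by (intro sum.cong) auto
    also have "\<dots> = (\<Sum>w\<in>hi. p w - u)" unfolding hi_def using fin by (simp add: sum.inter_filter)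
    finally show ?thesis .
  qed
  have Glo: "eps^2 \<le> 2 * sum G lo"
  proof -
    have "eps^2 \<le> (\<Sum>w\<in>lo. (u - p w)^2 / u) * (\<Sum>w\<in>lo. u)"
      unfolding epslo using upos by (intro weighted_CS) auto
    also have "\<dots> \<le> (\<Sum>w\<in>lo. 2 * G w) * 1"
    proof (intro mult_mono)
      show "(\<Sum>w\<in>lo. (u - p w)^2 / u) \<le> (\<Sum>w\<in>lo. 2 * G w)"
      proof (intro sum_mono)
        fix w assume "w \<in> lo"
        hence "(u - p w)^2 / (2 * u) \<le> G w" unfolding G_def lo_def
          using upos p0 by (intro G_lo) auto
        thus "(u - p w)^2 / u \<le> 2 * G w" using upos by (simp add: field_simps)
      qed
      show "(\<Sum>w\<in>lo. u) \<le> 1" using sumu lohi fin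
        by (metis (no_types, lifting) Un_upper1 less_imp_le sum_mono2 upos)
      show "0 \<le> (\<Sum>w\<in>lo. 2 * G w)"
        using \<open>(\<Sum>w\<in>lo. (u - p w)^2 / u) \<le> _\<close> sum_nonneg[of lo "\<lambda>w. (u - p w)^2 / u"] upos
        by force
    qed (use upos p0 in \<open>auto intro: sum_nonneg\<close>)
    finally show ?thesis by (simp add: sum_distrib_left)
  qed
  have Ghi: "eps^2 \<le> 2 * sum G hi"
  proof -
    have hip: "\<And>w. w \<in> hi \<Longrightarrow> p w > 0" using upos by (force simp: hi_def)
    have "eps^2 \<le> (\<Sum>w\<in>hi. (p w - u)^2 / p w) * (\<Sum>w\<in>hi. p w)"
      unfolding epshi using hip by (intro weighted_CS) auto
    also have "\<dots> \<le> (\<Sum>w\<in>hi. 2 * G w) * 1"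
    proof (intro mult_mono)
      show "(\<Sum>w\<in>hi. (p w - u)^2 / p w) \<le> (\<Sum>w\<in>hi. 2 * G w)"
      proof (intro sum_mono)
        fix w assume w: "w \<in> hi"
        hence "(p w - u)^2 / (2 * p w) \<le> G w" unfolding G_def hi_def
          using upos p0 by (intro G_hi) auto
        thus "(p w - u)^2 / p w \<le> 2 * G w" using hip[OF w] by (simp add: field_simps)
      qed
      show "(\<Sum>w\<in>hi. p w) \<le> 1" using sump lohi fin p0
        by (metis Un_upper2 sum_mono2)
      show "0 \<le> (\<Sum>w\<in>hi. 2 * G w)"
        using \<open>(\<Sum>w\<in>hi. (p w - u)^2 / p w) \<le> _\<close> sum_nonneg[of hi "\<lambda>w. (p w - u)^2 / p w"] hip
        by force
    qed (use upos p0 in \<open>auto intro: sum_nonneg\<close>)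
    finally show ?thesis by (simp add: sum_distrib_left)
  qed
  have epsG: "eps^2 \<le> sum G S" using Glo Ghi Gsplit by linarith
  have GS: "sum G S = (\<Sum>w\<in>S. p w * ln (p w / u))"
    unfolding G_def using sump sumu by (simp add: sum.distrib sum_subtractf)
  have RHS: "log 2 (card S) - (\<Sum>w\<in>set_pmf P. pmf P w * log 2 (1 / pmf P w))
             = (\<Sum>w\<in>S. p w * ln (p w / u)) / ln 2"
  proof -
    have "(\<Sum>w\<in>S. p w * ln (p w / u)) = (\<Sum>w\<in>set_pmf P. p w * ln (p w / u))"
      using sub fin by (intro sum.mono_neutral_right) (auto simp: p_def set_pmf_iff)
    also have "\<dots> = (\<Sum>w\<in>set_pmf P. p w * ln N - p w * ln (1 / p w))"
    proof (intro sum.cong refl)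
      fix w assume "w \<in> set_pmf P"
      hence pw: "p w > 0" by (simp add: p_def pmf_positive)
      show "p w * ln (p w / u) = p w * ln N - p w * ln (1 / p w)"
        using pw Npos by (simp add: u_def ln_div ln_mult algebra_simps)
    qed
    also have "\<dots> = ln N - (\<Sum>w\<in>set_pmf P. p w * ln (1 / p w))"
    proof -
      have "(\<Sum>w\<in>set_pmf P. p w) = 1" unfolding p_def
        by (rule sum_pmf_eq_1) (use fin sub finite_subset in auto)
      thus ?thesis by (simp add: sum_subtractf sum_distrib_right[symmetric])
    qed
    finally show ?thesis
      by (simp add: log_def N_def p_def diff_divide_distrib sum_divide_distrib)
  qed
  have D0: "(\<Sum>w\<in>S. p w * ln (p w / u)) \<ge> 0" using epsG GS
    by (metis order_trans zero_le_power2)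
  have "(\<Sum>w\<in>S. p w * ln (p w / u)) \<le> (\<Sum>w\<in>S. p w * ln (p w / u)) / ln 2"
  proof -
    have "ln (2::real) \<le> 1" using ln_le_minus_one[of 2] by simp
    moreover have "ln (2::real) > 0" by simp
    ultimately show ?thesis using D0 by (simp add: le_divide_eq mult_left_le)
  qed
  thus ?thesis using sq epsG GS RHS by linarith
qed

lemma finite_dom_n: "finite (dom_n n)"
proof -
  have "dom_n n \<subseteq> {x. length x = n} \<times> {1..n}" by (auto simp: dom_n_def)
  moreover have "finite ({x::bool list. length x = n} \<times> {1..n})"
    using finite_lists_length_eq[of "UNIV::bool set" n] by (intro finite_SigmaI) auto
  ultimately show ?thesis by (rule finite_subset)
qed

lemma dom_n_ne: "n \<ge> 1 \<Longrightarrow> dom_n n \<noteq> {}"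
  by (auto simp: dom_n_def intro!: exI[of _ "replicate n True"] exI[of _ 1])

lemma ce_J:
  fixes D :: "'z set" and A :: "'z \<Rightarrow> 'r::finite \<Rightarrow> 'w"
  assumes fin: "finite D" and ne: "D \<noteq> {}"
  shows "cond_entropy_pmf (map_pmf (\<lambda>(z, r). (z, A z r)) (pair_pmf (pmf_of_set D) (pmf_of_set (UNIV :: 'r set))))
     = (\<Sum>z\<in>D. \<Sum>w\<in>set_pmf (out_dist A z). pmf (out_dist A z) w * log 2 (1 / pmf (out_dist A z) w)) / card D"
proof -
  define RR where "RR = pmf_of_set (UNIV :: 'r set)"
  define U where "U = pmf_of_set D"
  define J where "J = map_pmf (\<lambda>(z, r). (z, A z r)) (pair_pmf U RR)"
  define P where "P z = out_dist A z" for z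
  have P_def': "P z = map_pmf (A z) RR" for z by (simp add: P_def out_dist_def RR_def)
  have fstJ: "map_pmf fst J = U"
    unfolding J_def map_pmf_comp by (simp add: case_prod_beta' map_fst_pair_pmf)
  have pmfU: "z \<in> D \<Longrightarrow> pmf U z = 1 / card D" for z using fin ne by (simp add: U_def)
  have pmfJ: "pmf J (z, w) = pmf U z * pmf (P z) w" for z w
  proof -
    have "(\<lambda>(z, r). (z, A z r)) -` {(z, w)} = {z} \<times> (A z -` {w})" by auto
    hence "pmf J (z, w) = measure_pmf.prob (pair_pmf U RR) ({z} \<times> (A z -` {w}))"
      unfolding J_def pmf_map by simp
    also have "\<dots> = measure_pmf.prob U {z} * measure_pmf.prob RR (A z -` {w})"
      by (rule measure_pmf_prob_product) auto
    finally show ?thesis by (simp add: P_def' pmf_map measure_pmf_single)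
  qed
  have setJ: "set_pmf J = Sigma D (\<lambda>z. set_pmf (P z))"
    using fin ne by (auto simp: J_def P_def' U_def RR_def set_pair_pmf)
  have finP: "finite (set_pmf (P z))" for z by (simp add: P_def')
  have "cond_entropy_pmf J = (\<Sum>(z,w)\<in>Sigma D (\<lambda>z. set_pmf (P z)).
            pmf J (z,w) * log 2 (pmf U z / pmf J (z,w)))"
    unfolding cond_entropy_pmf_def fstJ setJ by (simp add: case_prod_beta')
  also have "\<dots> = (\<Sum>z\<in>D. \<Sum>w\<in>set_pmf (P z). pmf J (z,w) * log 2 (pmf U z / pmf J (z,w)))"
    using fin finP by (subst sum.Sigma) auto
  also have "\<dots> = (\<Sum>z\<in>D. (\<Sum>w\<in>set_pmf (P z). pmf (P z) w * log 2 (1 / pmf (P z) w)) / card D)"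
  proof (intro sum.cong refl)
    fix z assume z: "z \<in> D"
    have cD: "real (card D) > 0" using fin ne by (simp add: card_gt_0_iff)
    show "(\<Sum>w\<in>set_pmf (P z). pmf J (z,w) * log 2 (pmf U z / pmf J (z,w)))
          = (\<Sum>w\<in>set_pmf (P z). pmf (P z) w * log 2 (1 / pmf (P z) w)) / card D"
      unfolding sum_divide_distrib
    proof (intro sum.cong refl)
      fix w assume w: "w \<in> set_pmf (P z)"
      hence pw: "pmf (P z) w > 0" by (simp add: pmf_positive)
      have "pmf U z / pmf J (z,w) = 1 / pmf (P z) w"
        using pw cD by (simp add: pmfJ pmfU[OF z])
      thus "pmf J (z,w) * log 2 (pmf U z / pmf J (z,w)) = pmf (P z) w * log 2 (1 / pmf (P z) w) / card D"
        by (simp add: pmfJ pmfU[OF z])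
    qed
  qed
  finally show ?thesis by (simp add: J_def U_def RR_def P_def sum_divide_distrib)
qed

lemma ce_K:
  fixes D :: "'z set" and g :: "'z \<Rightarrow> 'y"
  assumes fin: "finite D" and ne: "D \<noteq> {}"
  shows "cond_entropy_pmf (map_pmf (\<lambda>z. (g z, z)) (pmf_of_set D))
     = (\<Sum>z\<in>D. log 2 (card {z'\<in>D. g z' = g z})) / card D"
proof -
  define U where "U = pmf_of_set D"
  define h where "h = (\<lambda>z. (g z, z))"
  have inj: "inj h" by (auto simp: h_def inj_def)
  have cD: "real (card D) > 0" using fin ne by (simp add: card_gt_0_iff)
  have pmfU: "z \<in> D \<Longrightarrow> pmf U z = 1 / card D" for z using fin ne by (simp add: U_def)
  have setK: "set_pmf (map_pmf h U) = h ` D" using fin ne by (simp add: U_def)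
  have fstK: "map_pmf fst (map_pmf h U) = map_pmf g U"
    by (simp add: map_pmf_comp h_def)
  have pg: "z \<in> D \<Longrightarrow> pmf (map_pmf g U) (g z) = card {z'\<in>D. g z' = g z} / card D" for z
  proof -
    have "D \<inter> g -` {g z} = {z'\<in>D. g z' = g z}" by auto
    thus ?thesis using fin ne by (simp add: pmf_map U_def measure_pmf_of_set)
  qed
  have "cond_entropy_pmf (map_pmf h U)
      = (\<Sum>xy\<in>h ` D. pmf (map_pmf h U) xy * log 2 (pmf (map_pmf g U) (fst xy) / pmf (map_pmf h U) xy))"
    unfolding cond_entropy_pmf_def setK fstK ..
  also have "\<dots> = (\<Sum>z\<in>D. pmf (map_pmf h U) (h z) * log 2 (pmf (map_pmf g U) (g z) / pmf (map_pmf h U) (h z)))"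
    using inj by (subst sum.reindex) (auto simp: h_def inj_on_def)
  also have "\<dots> = (\<Sum>z\<in>D. log 2 (card {z'\<in>D. g z' = g z}) / card D)"
  proof (intro sum.cong refl)
    fix z assume z: "z \<in> D"
    have "pmf (map_pmf h U) (h z) = 1 / card D" using pmf_map_inj'[OF inj] pmfU[OF z] by simp
    thus "pmf (map_pmf h U) (h z) * log 2 (pmf (map_pmf g U) (g z) / pmf (map_pmf h U) (h z))
          = log 2 (card {z'\<in>D. g z' = g z}) / card D"
      using pg[OF z] cD by simp
  qed
  finally show ?thesis by (simp add: h_def U_def sum_divide_distrib)
qed


theorem lemma4p3:
  fixes n :: nat
    and f :: "bool list \<Rightarrow> bool list"
    and A :: "bool list \<times> nat \<Rightarrow> 'r::finite \<Rightarrow> bool list \<times> nat"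
  assumes n_pos: "n \<ge> 1"
    and f_range: "\<And>x. length x = n \<Longrightarrow> length (f x) = n"
    and collision_finder: "\<And>z r. z \<in> dom_n n \<Longrightarrow> A z r \<in> Fpreimage n f z"
    and entropy_hyp:
      "cond_entropy_pmf (map_pmf (\<lambda>(z, r). (z, A z r))
                           (pair_pmf (pmf_of_set (dom_n n)) (pmf_of_set (UNIV :: 'r set))))
       \<ge> cond_entropy_pmf (map_pmf (\<lambda>z. (Fpre f z, z)) (pmf_of_set (dom_n n)))
         - 1 / (64 * real n ^ 2)"
  shows "measure_pmf.expectation (pmf_of_set (dom_n n))
           (\<lambda>z. stat_dist (out_dist A z) (pmf_of_set (Fpreimage n f z)))
         \<le> 1 / (8 * real n)"
proof -
  define D where "D = dom_n n"
  have fin: "finite D" by (simp add: D_def finite_dom_n)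
  have ne: "D \<noteq> {}" using n_pos by (simp add: D_def dom_n_ne)
  define N where "N = real (card D)"
  have Npos: "N > 0" using fin ne by (simp add: N_def card_gt_0_iff)
  define H where "H z = (\<Sum>w\<in>set_pmf (out_dist A z). pmf (out_dist A z) w * log 2 (1 / pmf (out_dist A z) w))" for z
  define S where "S z = Fpreimage n f z" for z
  define eps where "eps z = stat_dist (out_dist A z) (pmf_of_set (S z))" for z
  define \<delta> where "\<delta> = 1 / (64 * real n ^ 2)"
  have S_eq: "S z = {z'\<in>D. Fpre f z' = Fpre f z}" for z by (simp add: S_def Fpreimage_def D_def)
  have hyp: "(\<Sum>z\<in>D. H z) / N \<ge> (\<Sum>z\<in>D. log 2 (card (S z))) / N - \<delta>"
    using entropy_hyp unfolding ce_J[OF fin[unfolded D_def] ne[unfolded D_def]]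
      ce_K[OF fin[unfolded D_def] ne[unfolded D_def]]
    by (simp add: H_def S_eq N_def D_def \<delta>_def)
  hence hyp': "(\<Sum>z\<in>D. log 2 (card (S z)) - H z) \<le> N * \<delta>"
  proof -
    have "((\<Sum>z\<in>D. log 2 (card (S z))) - (\<Sum>z\<in>D. H z)) / N \<le> \<delta>"
      using hyp by (simp add: diff_divide_distrib)
    hence "(\<Sum>z\<in>D. log 2 (card (S z))) - (\<Sum>z\<in>D. H z) \<le> \<delta> * N"
      using Npos by (simp add: pos_divide_le_eq)
    thus ?thesis by (simp add: sum_subtractf mult.commute)
  qed
  have per: "(eps z)^2 \<le> log 2 (card (S z)) - H z" if z: "z \<in> D" for z
    unfolding eps_def H_def
  proof (rule stat_dist_bound)
    show "finite (S z)" using fin by (simp add: S_eq)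
    have "z \<in> S z" using z by (simp add: S_eq)
    thus "S z \<noteq> {}" by blast
    show "set_pmf (out_dist A z) \<subseteq> S z"
      using collision_finder[of z] z by (auto simp: out_dist_def S_def D_def)
  qed
  have sq: "(\<Sum>z\<in>D. (eps z)^2) \<le> N * \<delta>"
    using sum_mono[of D "\<lambda>z. (eps z)^2" "\<lambda>z. log 2 (card (S z)) - H z", OF per] hyp' by linarith
  have cs: "(\<Sum>z\<in>D. eps z)^2 \<le> (\<Sum>z\<in>D. (eps z)^2) * N"
    using weighted_CS[of D "\<lambda>_. 1" eps] by (simp add: N_def)
  have "((\<Sum>z\<in>D. eps z) / N)^2 = (\<Sum>z\<in>D. eps z)^2 / N^2" by (simp add: power_divide)
  also have "\<dots> \<le> (\<Sum>z\<in>D. (eps z)^2) * N / N^2" using cs Npos by (simp add: divide_right_mono)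
  also have "\<dots> \<le> (N * \<delta>) * N / N^2" using sq Npos by (simp add: divide_right_mono mult_right_mono)
  also have "\<dots> = (1 / (8 * real n))^2" using Npos by (simp add: \<delta>_def power2_eq_square field_simps)
  finally have "((\<Sum>z\<in>D. eps z) / N)^2 \<le> (1 / (8 * real n))^2" .
  hence "(\<Sum>z\<in>D. eps z) / N \<le> 1 / (8 * real n)" by (rule power2_le_imp_le) simp
  moreover have "measure_pmf.expectation (pmf_of_set (dom_n n))
           (\<lambda>z. stat_dist (out_dist A z) (pmf_of_set (Fpreimage n f z))) = (\<Sum>z\<in>D. eps z) / N"
    using fin ne by (simp add: integral_pmf_of_set D_def N_def eps_def S_def)
  ultimately show ?thesis by simp
qed

end
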